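(* Let $d\ge 3$. For every positive integer $n$ there is a convex lattice polytope $\mathcal{P}\subseteq\mathbb{R}^d$ (all vertices in $\mathbb{Z}^d$) with at least $n$ vertices such that every point of $\mathcal{P}\cap\mathbb{Z}^d$ lies in a vertex, an edge, or a two-dimensional face of $\mathcal{P}$. *)

theory Defs
  imports "HOL-Analysis.Analysis"
begin

definition lattice_point :: "real^'d \<Rightarrow> bool" where
  "lattice_point x \<longleftrightarrow> (\<forall>i. x $ i \<in> \<int>)"

end

theory Submission
  imports Defs
begin

definition Pt :: "'d::finite \<Rightarrow> 'd \<Rightarrow> nat \<Rightarrow> ('d \<Rightarrow> real) \<Rightarrow> real^'d" where
  "Pt a b k f = (\<chi> i. if i = a then real k else if i = b then (real k)^2 else f i)"

definition Vs :: "'d::finite \<Rightarrow> 'd \<Rightarrow> nat \<Rightarrow> (real^'d) set" where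
  "Vs a b N = (\<lambda>(k,f). Pt a b k f) ` ({0..<N} \<times> {f. \<forall>i. f i \<in> {0,1}})"

lemma Vs_finite: "finite (Vs a b N)"
proof -
  have "finite {f::'d::finite\<Rightarrow>real. \<forall>i. (i \<in> UNIV \<longrightarrow> f i \<in> {0,1}) \<and> (i \<notin> UNIV \<longrightarrow> f i = 0)}"
    by (rule finite_set_of_finite_funs) simp_all
  then show ?thesis unfolding Vs_def by auto
qed

lemma Vs_cases: assumes "w \<in> Vs a b N"
  obtains k f where "k < N" "\<forall>i. f i \<in> {0,1}" "w = Pt a b k f"
  using assms unfolding Vs_def by auto

lemma f01: "\<forall>i. f i \<in> {0::real,1} \<Longrightarrow> 0 \<le> f i \<and> f i \<le> 1"
  by (metis empty_iff insert_iff order.refl zero_le_one)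

lemma Pt_comp: "Pt a b k f $ i = (if i = a then real k else if i = b then (real k)^2 else f i)"
  by (simp add: Pt_def)

lemma hull_in: assumes "convex C" "\<And>k f. k < N \<Longrightarrow> \<forall>i. f i \<in> {0,1} \<Longrightarrow> Pt a b k f \<in> C"
  shows "convex hull (Vs a b N) \<subseteq> C"
  apply (rule hull_minimal) using assms by (auto elim!: Vs_cases)

lemma coord_bounds: assumes "a \<noteq> b" "i \<noteq> a" "i \<noteq> b" "y \<in> convex hull (Vs a b N)"
  shows "0 \<le> y $ i" "y $ i \<le> 1"
proof -
  have "convex hull (Vs a b N) \<subseteq> {x. inner (axis i 1) x \<ge> 0}"
    by (rule hull_in[OF convex_halfspace_ge]) (use assms in \<open>auto simp: inner_axis' Pt_comp f01\<close>)
  then show "0 \<le> y $ i" using assms(4) by (auto simp: inner_axis')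
  have "convex hull (Vs a b N) \<subseteq> {x. inner (axis i 1) x \<le> 1}"
    by (rule hull_in[OF convex_halfspace_le]) (use assms in \<open>auto simp: inner_axis' Pt_comp f01\<close>)
  then show "y $ i \<le> 1" using assms(4) by (auto simp: inner_axis')
qed

lemma coord_face: assumes "a \<noteq> b" "i \<noteq> a" "i \<noteq> b" "c \<in> {0,1}"
  shows "convex hull (Vs a b N) \<inter> {y. y $ i = c} face_of convex hull (Vs a b N)"
proof (cases "c = 0")
  case True
  have "convex hull (Vs a b N) \<inter> {y. inner (axis i 1) y = 0} face_of convex hull (Vs a b N)"
    by (rule face_of_Int_supporting_hyperplane_ge) (use coord_bounds[OF assms(1-3)] in \<open>auto simp: inner_axis'\<close>)
  then show ?thesis using True by (simp add: inner_axis')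
next
  case False
  then have c: "c = 1" using assms by auto
  have "convex hull (Vs a b N) \<inter> {y. inner (axis i 1) y = 1} face_of convex hull (Vs a b N)"
    by (rule face_of_Int_supporting_hyperplane_le) (use coord_bounds[OF assms(1-3)] in \<open>auto simp: inner_axis'\<close>)
  then show ?thesis using c by (simp add: inner_axis')
qed

lemma epi_convex: "convex {y::real^'d. (y $ a)^2 \<le> y $ b}"
proof (rule convexI, simp)
  fix x y :: "real^'d" and u v :: real
  assume h: "x $ a ^ 2 \<le> x $ b" "y $ a ^ 2 \<le> y $ b" "0 \<le> u" "0 \<le> v" "u + v = 1"
  have vv: "v = 1 - u" using h(5) by simp
  have "(u * x $ a + v * y $ a)^2 = u * (x $ a)^2 + v * (y $ a)^2 - u * v * (x $ a - y $ a)^2"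
    unfolding vv by (simp add: power2_eq_square algebra_simps)
  also have "\<dots> \<le> u * (x $ a)^2 + v * (y $ a)^2" using h by simp
  also have "\<dots> \<le> u * x $ b + v * y $ b" using h by (simp add: add_mono mult_left_mono)
  finally show "(u * x $ a + v * y $ a)\<^sup>2 \<le> u * x $ b + v * y $ b" .
qed

lemma Pt_in: "k < N \<Longrightarrow> \<forall>i. f i \<in> {0,1} \<Longrightarrow> Pt a b k f \<in> Vs a b N"
  unfolding Vs_def by force

lemma Pt_extreme: assumes ab: "a \<noteq> b" and kN: "k < N" and f: "\<forall>i. f i \<in> {0,1}"
  shows "Pt a b k f extreme_point_of convex hull (Vs a b N)"
proof -
  define C where "C = convex hull (Vs a b N)"
  define v where "v = Pt a b k f"
  define t :: "real^'a" where "t = axis b 1 - (2 * real k) *\<^sub>R axis a 1"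
  have tin: "inner t y = y $ b - 2 * real k * y $ a" for y
    by (simp add: t_def inner_diff_left inner_axis')
  have Cge: "\<forall>y\<in>C. inner t y \<ge> - ((real k)^2)"
  proof -
    have "C \<subseteq> {y. inner t y \<ge> - ((real k)^2)}"
      unfolding C_def
    proof (rule hull_in[OF convex_halfspace_ge])
      fix j and g :: "'a \<Rightarrow> real" assume "j < N" "\<forall>i. g i \<in> {0::real,1}"
      have "0 \<le> (real j - real k)^2" by simp
      then have "real j ^ 2 - 2 * real k * real j \<ge> - ((real k)^2)"
        by (simp add: power2_eq_square algebra_simps)
      then show "Pt a b j g \<in> {y. inner t y \<ge> - ((real k)^2)}"
        using ab by (simp add: tin Pt_comp)
    qed
    then show ?thesis by auto
  qed
  have epi: "\<forall>y\<in>C. (y $ a)^2 \<le> y $ b"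
  proof -
    have "C \<subseteq> {y. (y $ a)^2 \<le> y $ b}"
      unfolding C_def
      by (rule hull_in[OF epi_convex]) (use ab in \<open>simp add: Pt_comp\<close>)
    then show ?thesis by auto
  qed
  define H0 where "H0 = C \<inter> {y. inner t y = - ((real k)^2)}"
  have H0f: "H0 face_of C"
    unfolding H0_def by (rule face_of_Int_supporting_hyperplane_ge) (use Cge in \<open>auto simp: C_def\<close>)
  define A where "A = insert H0 ((\<lambda>i. C \<inter> {y. y $ i = f i}) ` {i. i \<noteq> a \<and> i \<noteq> b})"
  have Af: "\<Inter>A face_of C"
    apply (rule face_of_Inter)
    using H0f coord_face[OF ab, of _ "f _" N] f by (auto simp: A_def C_def)
  have vC: "v \<in> C" unfolding C_def v_def using Pt_in[OF kN f] hull_subset[of "Vs a b N" convex] by (rule subsetD[rotated])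
  have "\<Inter>A = {v}"
  proof
    have "inner t v = - ((real k)^2)" using ab by (simp add: tin v_def Pt_comp power2_eq_square)
    then have "v \<in> H0" using vC by (simp add: H0_def)
    moreover have "v \<in> C \<inter> {y. y $ i = f i}" if "i \<noteq> a" "i \<noteq> b" for i
      using vC that by (simp add: v_def Pt_comp)
    ultimately show "{v} \<subseteq> \<Inter>A" by (auto simp: A_def)
    show "\<Inter>A \<subseteq> {v}"
    proof
      fix y assume y: "y \<in> \<Inter>A"
      then have yC: "y \<in> C" and yt: "inner t y = - ((real k)^2)" by (auto simp: A_def H0_def)
      have yo: "y $ i = f i" if "i \<noteq> a" "i \<noteq> b" for i
      proof -
        have "C \<inter> {y. y $ i = f i} \<in> A" using that unfolding A_def by blast
        then show ?thesis using y by blast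
      qed
      have e: "(y $ a)^2 \<le> y $ b" using epi yC by auto
      have "(y $ a - real k)^2 \<le> 0" using e yt unfolding tin by (simp add: power2_eq_square algebra_simps)
      then have ya: "y $ a = real k" by simp
      then have yb: "y $ b = (real k)^2" using yt unfolding tin by (simp add: power2_eq_square)
      show "y \<in> {v}" using ya yb yo by (auto simp: v_def vec_eq_iff Pt_comp)
    qed
  qed
  then show ?thesis using Af by (simp add: face_of_singleton C_def v_def)
qed

lemma span_full: fixes a b :: "'a::finite" assumes ab: "a \<noteq> b" and N: "N \<ge> 3"
  shows "span (Vs a b N) = UNIV"
proof -
  let ?V = "Vs a b N"
  define z :: "'a \<Rightarrow> real" where "z = (\<lambda>_. 0)"
  have z: "\<forall>i. z i \<in> {0,1}" by (simp add: z_def)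
  have p1: "Pt a b 1 z \<in> span ?V" by (rule span_base, rule Pt_in) (use N z in auto)
  have p2: "Pt a b 2 z \<in> span ?V" by (rule span_base, rule Pt_in) (use N z in auto)
  have eb: "axis b 1 = (1/2) *\<^sub>R (Pt a b 2 z - 2 *\<^sub>R Pt a b 1 z)"
    using ab by (auto simp: vec_eq_iff axis_def Pt_comp z_def)
  have ebs: "axis b 1 \<in> span ?V" unfolding eb
    by (intro span_mul span_diff p1 p2)
  have ea: "axis a 1 = Pt a b 1 z - axis b 1"
    using ab by (auto simp: vec_eq_iff axis_def Pt_comp z_def)
  have eas: "axis a 1 \<in> span ?V" unfolding ea by (intro span_diff p1 ebs)
  have eis: "axis i 1 \<in> span ?V" for i
  proof (cases "i = a \<or> i = b")
    case True then show ?thesis using eas ebs by auto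
  next
    case False
    define g :: "'a \<Rightarrow> real" where "g = (\<lambda>j. if j = i then 1 else 0)"
    have g: "\<forall>j. g j \<in> {0,1}" by (simp add: g_def)
    have "axis i 1 = Pt a b 0 g" using False by (auto simp: vec_eq_iff axis_def Pt_comp g_def)
    moreover have "Pt a b 0 g \<in> span ?V" by (rule span_base, rule Pt_in) (use N g in auto)
    ultimately show ?thesis by simp
  qed
  have "Basis \<subseteq> span ?V"
    using eis by (auto simp: Basis_vec_def)
  then have "span Basis \<subseteq> span ?V" by (intro span_minimal subspace_span)
  then show ?thesis by auto
qed

lemma affdim_full: fixes a b :: "'a::finite" assumes ab: "a \<noteq> b" and N: "N \<ge> 3"
  shows "aff_dim (convex hull (Vs a b N)) = int CARD('a)"
proof -
  define z :: "'a \<Rightarrow> real" where "z = (\<lambda>_. 0)"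
  have z: "\<forall>i. z i \<in> {0,1}" by (simp add: z_def)
  have e0: "Pt a b 0 z = 0" by (simp add: vec_eq_iff Pt_comp z_def)
  have "Pt a b 0 z \<in> Vs a b N" by (rule Pt_in) (use N z in auto)
  then have "0 \<in> Vs a b N" by (simp only: e0)
  then have "0 \<in> affine hull (Vs a b N)" by (rule hull_inc)
  then have "aff_dim (Vs a b N) = int (dim (Vs a b N))"
    using aff_dim_eq_dim[of 0 "Vs a b N"] by simp
  also have "dim (Vs a b N) = DIM(real^'a)"
    using span_full[OF ab N] dim_eq_full by blast
  finally show ?thesis by (simp add: aff_dim_convex_hull)
qed

lemma face_lat: fixes a b :: "'a::finite" assumes ab: "a \<noteq> b"
  and x: "x \<in> convex hull (Vs a b N)" and lat: "lattice_point x"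
  shows "\<exists>F. F face_of (convex hull (Vs a b N)) \<and> aff_dim F \<le> 2 \<and> x \<in> F"
proof -
  define C where "C = convex hull (Vs a b N)"
  have x01: "x $ i \<in> {0,1}" if "i \<noteq> a" "i \<noteq> b" for i
  proof -
    have "0 \<le> x $ i" "x $ i \<le> 1" using coord_bounds[OF ab that x] by auto
    moreover obtain m where "x $ i = of_int m" using lat unfolding lattice_point_def by (metis Ints_cases)
    ultimately show ?thesis by auto
  qed
  define A where "A = insert C ((\<lambda>i. C \<inter> {y. y $ i = x $ i}) ` {i. i \<noteq> a \<and> i \<noteq> b})"
  have Af: "\<Inter>A face_of C"
  proof (rule face_of_Inter)
    show "A \<noteq> {}" by (simp add: A_def)
    fix T assume "T \<in> A"
    then consider "T = C" | i where "i \<noteq> a" "i \<noteq> b" "T = C \<inter> {y. y $ i = x $ i}"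
      unfolding A_def by blast
    then show "T face_of C"
    proof cases
      case 1 then show ?thesis by (simp add: C_def face_of_refl convex_convex_hull)
    next
      case 2 then show ?thesis unfolding C_def using coord_face[OF ab 2(1,2) x01[OF 2(1,2)]] by simp
    qed
  qed
  have xA: "x \<in> \<Inter>A" using x unfolding A_def C_def by auto
  have sub: "(\<lambda>y. y - x) ` \<Inter>A \<subseteq> span {axis a 1, axis b 1}"
  proof
    fix w assume "w \<in> (\<lambda>y. y - x) ` \<Inter>A"
    then obtain y where y: "y \<in> \<Inter>A" and w: "w = y - x" by auto
    have yo: "y $ i = x $ i" if "i \<noteq> a" "i \<noteq> b" for i
    proof -
      have "C \<inter> {y. y $ i = x $ i} \<in> A" using that unfolding A_def by blast
      then show ?thesis using y by blast
    qed
    have "w = (w $ a) *\<^sub>R axis a 1 + (w $ b) *\<^sub>R axis b 1"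
      using yo ab by (auto simp: vec_eq_iff axis_def w)
    also have "\<dots> \<in> span {axis a 1, axis b 1}"
      by (intro span_add span_mul span_base) auto
    finally show "w \<in> span {axis a 1, axis b 1}" .
  qed
  have "aff_dim (\<Inter>A) = aff_dim ((\<lambda>y. y - x) ` \<Inter>A)"
    by (simp add: aff_dim_translation_eq_subtract)
  also have "\<dots> \<le> aff_dim (span {axis a 1, axis b 1 :: real^'a})"
    by (rule aff_dim_subset[OF sub])
  also have "\<dots> = int (dim {axis a 1, axis b 1 :: real^'a})"
    by (simp add: aff_dim_subspace)
  also have "\<dots> \<le> 2"
  proof -
    have "dim {axis a 1, axis b 1 :: real^'a} \<le> card {axis a 1, axis b 1 :: real^'a}"
      by (rule dim_le_card) (auto intro: span_base)
    also have "\<dots> \<le> 2" by (rule card_insert_le_m1) auto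
    finally show ?thesis by simp
  qed
  finally show ?thesis using Af xA unfolding C_def by blast
qed

theorem theorem11:
  fixes n :: nat
  assumes "CARD('d) \<ge> 3" and "n > 0"
  shows "\<exists>V :: (real^'d) set. finite V \<and> (\<forall>v\<in>V. lattice_point v) \<and>
           aff_dim (convex hull V) = int CARD('d) \<and>
           card {v. v extreme_point_of (convex hull V)} \<ge> n \<and>
           (\<forall>x \<in> convex hull V. lattice_point x \<longrightarrow>
              (\<exists>F. F face_of (convex hull V) \<and> aff_dim F \<le> 2 \<and> x \<in> F))"
proof -
  have "\<exists>a b::'d. a \<noteq> b"
  proof (rule ccontr)
    assume "\<not> ?thesis"
    then have "(UNIV::'d set) = {undefined}" by auto
    then show False using assms(1) by (metis card.empty card_insert_disjoint empty_iff finite.emptyI numeral_le_one_iff semiring_norm(70) One_nat_def)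
  qed
  then obtain a b :: 'd where ab: "a \<noteq> b" by blast
  define N where "N = n + 3"
  have N3: "N \<ge> 3" by (simp add: N_def)
  define V where "V = Vs a b N"
  have fin: "finite V" by (simp add: V_def Vs_finite)
  have lat: "\<forall>v\<in>V. lattice_point v"
  proof
    fix v assume "v \<in> V"
    then obtain k f where "\<forall>i. f i \<in> {0::real,1}" "v = Pt a b k f" unfolding V_def by (auto elim: Vs_cases)
    moreover have "f i \<in> \<int>" for i
    proof -
      have "f i = 0 \<or> f i = 1" using calculation(1) by simp
      then show ?thesis by auto
    qed
    ultimately show "lattice_point v" unfolding lattice_point_def
      by (simp add: Pt_comp)
  qed
  define z :: "'d \<Rightarrow> real" where "z = (\<lambda>_. 0)"
  have z: "\<forall>i. z i \<in> {0,1}" by (simp add: z_def)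
  have sub: "(\<lambda>k. Pt a b k z) ` {..<n} \<subseteq> {v. v extreme_point_of (convex hull V)}"
  proof
    fix v assume "v \<in> (\<lambda>k. Pt a b k z) ` {..<n}"
    then obtain k where "k < n" "v = Pt a b k z" by auto
    moreover have "k < N" using \<open>k < n\<close> by (simp add: N_def)
    ultimately show "v \<in> {v. v extreme_point_of (convex hull V)}"
      using Pt_extreme[OF ab _ z] unfolding V_def by auto
  qed
  have inj: "inj_on (\<lambda>k. Pt a b k z) {..<n}"
  proof
    fix k l assume "Pt a b k z = Pt a b l z"
    then have "Pt a b k z $ a = Pt a b l z $ a" by simp
    then show "k = l" by (simp add: Pt_comp)
  qed
  have finE: "finite {v. v extreme_point_of (convex hull V)}"
    by (rule finite_subset[OF _ fin]) (auto dest: extreme_point_of_convex_hull)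
  have "n = card ((\<lambda>k. Pt a b k z) ` {..<n})" using card_image[OF inj] by simp
  also have "\<dots> \<le> card {v. v extreme_point_of (convex hull V)}"
    by (rule card_mono[OF finE sub])
  finally have cardE: "n \<le> card {v. v extreme_point_of (convex hull V)}" .
  show ?thesis
    using fin lat cardE affdim_full[OF ab N3] face_lat[OF ab] unfolding V_def
    by blast
qed

end
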